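(* Let $u=u_1\ldots u_n\in\mathbb{P}^*$ have an increasing/decreasing factorization, and fix $1\le i\le n-1$. Let $\mathcal{S}^{(i)}(u)$ be the set of words $w=w_1\ldots w_m\in\mathbb{P}^*$ such that (i) $u$ embeds into the suffix $w_{m-n+1}\ldots w_m$ (i.e. $u\le w_{m-n+1}\ldots w_m$ letterwise), and (ii) the leftmost embedding of $u$ into $w$ occupies positions $m-2n+i+1,\ldots,m-n+i$ (so it overlaps the final $n$ positions in exactly $i$ positions). Let $S^{(i)}(u;t,x)=\sum_{w\in\mathcal{S}^{(i)}(u)}t^{|w|}x^{\Sigma(w)}$. Then, with $s_i=u_{i+1}\ldots u_n$, $$S^{(i)}(u;t,x)=S(u;t,x)\,t^{n-i}x^{d_i(u)+\Sigma(s_i)}\left(\frac{1}{1-x}\right)^{n-i}.$$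
   Context: $\mathbb{P}$ is the set of positive integers with the usual order, $\mathbb{P}^*$ the finite words over $\mathbb{P}$. For $w=w_1\ldots w_n$, $|w|=n$, $\Sigma(w)=\sum w_i$, $\mathrm{wt}(w)=t^{|w|}x^{\Sigma(w)}$. For words $u,w$, an embedding of $u$ into $w$ is a string $v$ of $|u|$ consecutive letters of $w$ whose $i$-th letter is $\ge$ the $i$-th letter of $u$ for every $i$; $u\le w$ means such an embedding exists. $\mathcal{S}(u)$ is the set of words $w$ with $u\le w$ such that the last $|u|$ letters of $w$ form the only embedding of $u$ into $w$, and $S(u;t,x)=\sum_{w\in\mathcal{S}(u)}\mathrm{wt}(w)$. $u=u_1\ldots u_n$ has an increasing/decreasing factorization if $u_1\le\cdots\le u_n$ or there is $k<n$ with $u_1\le\cdots\le u_k>u_{k+1}\ge\cdots\ge u_n$. $D^{(i)}(u)=\{n-i+j:1\le j\le i,\ u_j>u_{n-i+j}\}$ and $d_i(u)=\sum_{n-i+j\in D^{(i)}(u)}(u_j-u_{n-i+j})$. *)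

theory Defs
  imports "HOL-Computational_Algebra.Formal_Power_Series"
begin

definition pword :: "nat list \<Rightarrow> bool" where
  "pword w \<longleftrightarrow> (\<forall>a\<in>set w. 0 < a)"

text \<open>An embedding of u into w starting at (0-based) position j.\<close>
definition embeds_at :: "nat list \<Rightarrow> nat list \<Rightarrow> nat \<Rightarrow> bool" where
  "embeds_at u w j \<longleftrightarrow> j + length u \<le> length w \<and> (\<forall>k<length u. u ! k \<le> w ! (j + k))"

definition embeds :: "nat list \<Rightarrow> nat list \<Rightarrow> bool" where
  "embeds u w \<longleftrightarrow> (\<exists>j. embeds_at u w j)"

definition Sset :: "nat list \<Rightarrow> nat list set" where
  "Sset u = {w. pword w \<and> embeds u w \<and>
      (\<forall>j. embeds_at u w j \<longleftrightarrow> j = length w - length u)}"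

definition Siset :: "nat list \<Rightarrow> nat \<Rightarrow> nat list set" where
  "Siset u i = {w. pword w \<and> 2 * length u \<le> length w + i \<and>
      embeds_at u w (length w - length u) \<and>
      embeds_at u w (length w + i - 2 * length u) \<and>
      (\<forall>j < length w + i - 2 * length u. \<not> embeds_at u w j)}"

definition inc_dec_fact :: "nat list \<Rightarrow> bool" where
  "inc_dec_fact u \<longleftrightarrow> sorted u \<or>
     (\<exists>k. 1 \<le> k \<and> k < length u \<and> sorted (take k u) \<and> u ! (k - 1) > u ! k \<and>
          sorted_wrt (\<ge>) (drop k u))"

text \<open>d_i(u), with 0-based indices: sum over j<i of u_j - u_(n-i+j) where positive.\<close>
definition d_i :: "nat list \<Rightarrow> nat \<Rightarrow> nat" where
  "d_i u i = (\<Sum>j<i. if u ! j > u ! (length u - i + j) then u ! j - u ! (length u - i + j) else 0)"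

text \<open>Bivariate formal generating function \<Sum>_{w\<in>A} t^|w| x^\<Sigma>(w), represented as a power series
  in x whose coefficients are power series in t (for fixed \<Sigma>(w) only finitely many positive
  words exist, so coefficients are well defined cardinalities).\<close>
definition GF :: "nat list set \<Rightarrow> real fps fps" where
  "GF A = Abs_fps (\<lambda>N. Abs_fps (\<lambda>L. real (card {w\<in>A. length w = L \<and> sum_list w = N})))"

abbreviation xvar :: "real fps fps" where "xvar \<equiv> fps_X"
abbreviation tvar :: "real fps fps" where "tvar \<equiv> fps_const fps_X"

end

theory Submission
  imports Defs
begin


lemma GF_nth: "fps_nth (fps_nth (GF A) N) L = real (card {w\<in>A. length w = L \<and> sum_list w = N})"
  by (simp add: GF_def)

lemma GF_shift:
  assumes bij: "bij_betw f B C"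
    and len: "\<And>w. w \<in> B \<Longrightarrow> length (f w) = length w"
    and sm: "\<And>w. w \<in> B \<Longrightarrow> sum_list (f w) = sum_list w + d"
  shows "GF C = GF B * xvar ^ d"
proof (rule fps_ext)
  fix N show "fps_nth (GF C) N = fps_nth (GF B * xvar^d) N"
  proof (rule fps_ext)
    fix L
    have e: "fps_nth (GF B * xvar^d) N = (if d \<le> N then fps_nth (GF B) (N-d) else 0)"
      by (simp add: fps_X_power_mult_right_nth)
    show "fps_nth (fps_nth (GF C) N) L = fps_nth (fps_nth (GF B * xvar^d) N) L"
    proof (cases "d \<le> N")
      case True
      have "bij_betw f {w\<in>B. length w = L \<and> sum_list w = N - d} {w\<in>C. length w = L \<and> sum_list w = N}"
        unfolding bij_betw_def
      proof
        show "inj_on f {w \<in> B. length w = L \<and> sum_list w = N - d}"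
          using bij by (auto simp: bij_betw_def intro: inj_on_subset)
        show "f ` {w \<in> B. length w = L \<and> sum_list w = N - d} = {w \<in> C. length w = L \<and> sum_list w = N}"
        proof
          show "f ` {w \<in> B. length w = L \<and> sum_list w = N - d} \<subseteq> {w \<in> C. length w = L \<and> sum_list w = N}"
            using bij True len sm by (auto simp: bij_betw_def)
          show "{w \<in> C. length w = L \<and> sum_list w = N} \<subseteq> f ` {w \<in> B. length w = L \<and> sum_list w = N - d}"
          proof
            fix c assume c: "c \<in> {w \<in> C. length w = L \<and> sum_list w = N}"
            then obtain b where b: "b \<in> B" "c = f b" using bij by (auto simp: bij_betw_def)
            then show "c \<in> f ` {w \<in> B. length w = L \<and> sum_list w = N - d}"
              using c len[OF b(1)] sm[OF b(1)] by auto
          qed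
        qed
      qed
      then have "card {w\<in>B. length w = L \<and> sum_list w = N - d} = card {w\<in>C. length w = L \<and> sum_list w = N}"
        by (rule bij_betw_same_card)
      then show ?thesis using True e by (simp add: GF_nth)
    next
      case False
      have "{w\<in>C. length w = L \<and> sum_list w = N} = {}"
      proof (rule ccontr)
        assume "{w\<in>C. length w = L \<and> sum_list w = N} \<noteq> {}"
        then obtain c where c: "c \<in> C" "sum_list c = N" by auto
        then obtain b where b: "b \<in> B" "c = f b" using bij by (auto simp: bij_betw_def)
        then show False using c sm[OF b(1)] False by auto
      qed
      then have "fps_nth (fps_nth (GF C) N) L = 0" by (simp only: GF_nth card.empty) 
      then show ?thesis using False e by simp
    qed
  qed
qed

lemma inv_one_minus_X: "inverse (1 - xvar) = Abs_fps (\<lambda>n. 1)"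
proof -
  have h: "inverse (fps_nth (1 - xvar) 0) = 1" by simp
  have "inverse (1 - xvar) = fps_right_inverse (1 - xvar) (inverse (fps_nth (1 - xvar) 0))"
    by (rule fps_inverse_def)
  also have "\<dots> = Abs_fps (\<lambda>n. 1)" unfolding h by (rule fps_lr_inverse_one_minus_fps_X(2))
  finally show ?thesis .
qed

lemma G_nth: "fps_nth (tvar * xvar ^ c * inverse (1 - xvar)) n = (if c \<le> n then fps_X else 0)"
  by (simp add: inv_one_minus_X mult.assoc fps_X_power_mult_nth)

lemma fin_words: "finite {w::nat list. length w = L \<and> sum_list w = k}"
proof (rule finite_subset)
  show "{w::nat list. length w = L \<and> sum_list w = k} \<subseteq> {xs. set xs \<subseteq> {0..k} \<and> length xs = L}"
    using member_le_sum_list by fastforce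
  show "finite {xs. set xs \<subseteq> {0..k::nat} \<and> length xs = L}"
    by (rule finite_lists_length_eq) simp
qed

lemma fin_C: "finite {w\<in>B. length w = L \<and> sum_list (w::nat list) = k}"
  by (rule finite_subset[OF _ fin_words[of L k]]) auto

lemma GF_append:
  "GF {w @ [a] | w a. w \<in> B \<and> c \<le> a} = GF B * (tvar * xvar ^ c * inverse (1 - xvar))"
  (is "GF ?D = GF B * ?G")
proof (rule fps_ext)
  fix N show "fps_nth (GF ?D) N = fps_nth (GF B * ?G) N"
  proof (rule fps_ext)
    fix L
    define K where "K = {k\<in>{0..N}. c \<le> N - k}"
    have r: "fps_nth (fps_nth (GF B * ?G) N) L =
       (\<Sum>k=0..N. fps_nth (if c \<le> N - k then fps_nth (GF B) k * fps_X else 0) L)"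
    proof -
      have "fps_nth (GF B * ?G) N = (\<Sum>k=0..N. fps_nth (GF B) k * fps_nth ?G (N - k))"
        by (rule fps_mult_nth)
      also have "\<dots> = (\<Sum>k=0..N. (if c \<le> N - k then fps_nth (GF B) k * fps_X else 0))"
        by (rule sum.cong) (simp_all only: G_nth, simp)
      finally show ?thesis by (simp add: fps_sum_nth)
    qed
    show "fps_nth (fps_nth (GF ?D) N) L = fps_nth (fps_nth (GF B * ?G) N) L"
    proof (cases L)
      case 0
      have "{w\<in>?D. length w = L \<and> sum_list w = N} = {}" using 0 by auto
      then have e0: "card {w\<in>?D. length w = L \<and> sum_list w = N} = 0" by (simp only: card.empty)
      have "(\<Sum>k=0..N. fps_nth (if c \<le> N - k then fps_nth (GF B) k * fps_X else 0) L) = 0"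
        by (rule sum.neutral) (simp add: 0)
      then show ?thesis unfolding GF_nth e0 r by simp
    next
      case (Suc L')
      have eq: "{w\<in>?D. length w = L \<and> sum_list w = N} =
          (\<Union>k\<in>K. (\<lambda>w. w @ [N - k]) ` {w\<in>B. length w = L' \<and> sum_list w = k})"
      proof
        show "{w\<in>?D. length w = L \<and> sum_list w = N} \<subseteq>
          (\<Union>k\<in>K. (\<lambda>w. w @ [N - k]) ` {w\<in>B. length w = L' \<and> sum_list w = k})"
        proof
          fix x assume "x \<in> {w\<in>?D. length w = L \<and> sum_list w = N}"
          then obtain w a where x: "x = w @ [a]" "w \<in> B" "c \<le> a" "length w = L'" "sum_list w + a = N"
            using Suc by auto
          then have "sum_list w \<in> K" "a = N - sum_list w" by (auto simp: K_def)
          then show "x \<in> (\<Union>k\<in>K. (\<lambda>w. w @ [N - k]) ` {w\<in>B. length w = L' \<and> sum_list w = k})"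
            using x by auto
        qed
        show "(\<Union>k\<in>K. (\<lambda>w. w @ [N - k]) ` {w\<in>B. length w = L' \<and> sum_list w = k}) \<subseteq>
           {w\<in>?D. length w = L \<and> sum_list w = N}"
          using Suc by (auto simp: K_def)
      qed
      have "card {w\<in>?D. length w = L \<and> sum_list w = N} =
          (\<Sum>k\<in>K. card ((\<lambda>w. w @ [N - k]) ` {w\<in>B. length w = L' \<and> sum_list w = k}))"
        unfolding eq
        by (rule card_UN_disjoint) (auto simp: K_def fin_C)
      also have "\<dots> = (\<Sum>k\<in>K. card {w\<in>B. length w = L' \<and> sum_list w = k})"
        by (rule sum.cong) (auto simp: card_image inj_on_def)
      finally have c: "real (card {w\<in>?D. length w = L \<and> sum_list w = N}) =
          (\<Sum>k\<in>K. real (card {w\<in>B. length w = L' \<and> sum_list w = k}))" by simp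
      have "(\<Sum>k\<in>K. real (card {w\<in>B. length w = L' \<and> sum_list w = k})) =
          (\<Sum>k=0..N. (if c \<le> N - k then real (card {w\<in>B. length w = L' \<and> sum_list w = k}) else 0))"
        unfolding K_def by (rule sum.inter_filter) simp
      moreover have "(\<Sum>k=0..N. fps_nth (if c \<le> N - k then fps_nth (GF B) k * fps_X else 0) L)
         = (\<Sum>k=0..N. (if c \<le> N - k then real (card {w\<in>B. length w = L' \<and> sum_list w = k}) else 0))"
        by (rule sum.cong) (auto simp: GF_nth Suc)
      ultimately show ?thesis using r c by (simp only: GF_nth)
    qed
  qed
qed



lemma no_valley:
  assumes "inc_dec_fact u" "a < b" "b \<le> c" "c < length u" "u!b < u!a"
  shows "u!c \<le> u!b"
proof -
  from assms(1) consider "sorted u" | K where "1 \<le> K" "K < length u" "sorted (take K u)"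
     "sorted_wrt (\<ge>) (drop K u)" unfolding inc_dec_fact_def by blast
  then show ?thesis
  proof cases
    case 1
    then have "u!a \<le> u!b" using assms by (simp add: sorted_nth_mono)
    then show ?thesis using assms by simp
  next
    case 2
    show ?thesis
    proof (cases "b < K")
      case True
      have "take K u ! a \<le> take K u ! b"
        using 2(3) True assms by (intro sorted_nth_mono) auto
      then have "u!a \<le> u!b" using True assms by simp
      then show ?thesis using assms by simp
    next
      case False
      show ?thesis
      proof (cases "b = c")
        case True then show ?thesis by simp
      next
        case ne: False
        have "drop K u ! (c - K) \<le> drop K u ! (b - K)"
          using 2(4) False ne assms by (intro sorted_wrt_nth_less[of "(\<ge>)", simplified]) auto
        then show ?thesis using False assms by simp
      qed
    qed
  qed
qed

definition delta :: "nat list \<Rightarrow> nat \<Rightarrow> nat \<Rightarrow> nat" where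
  "delta u i j = (if u ! j > u ! (length u - i + j) then u ! j - u ! (length u - i + j) else 0)"

definition raise :: "nat list \<Rightarrow> nat \<Rightarrow> nat list \<Rightarrow> nat list" where
  "raise u i w = map (\<lambda>k. if length w - i \<le> k then w!k + delta u i (k - (length w - i)) else w!k) [0..<length w]"

definition lower :: "nat list \<Rightarrow> nat \<Rightarrow> nat list \<Rightarrow> nat list" where
  "lower u i w = map (\<lambda>k. if length w - i \<le> k then w!k - delta u i (k - (length w - i)) else w!k) [0..<length w]"

lemma length_raise[simp]: "length (raise u i w) = length w" by (simp add: raise_def)
lemma length_lower[simp]: "length (lower u i w) = length w" by (simp add: lower_def)
lemma nth_raise: "k < length w \<Longrightarrow> raise u i w ! k =
   (if length w - i \<le> k then w!k + delta u i (k - (length w - i)) else w!k)"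
  by (simp add: raise_def)
lemma nth_lower: "k < length w \<Longrightarrow> lower u i w ! k =
   (if length w - i \<le> k then w!k - delta u i (k - (length w - i)) else w!k)"
  by (simp add: lower_def)

lemma Sset_D:
  assumes "w \<in> Sset u"
  shows "pword w" "embeds_at u w (length w - length u)" "length u \<le> length w"
    "\<And>j. embeds_at u w j \<Longrightarrow> j = length w - length u"
proof -
  have A: "pword w" "embeds u w" "\<And>j. embeds_at u w j \<longleftrightarrow> j = length w - length u"
    using assms unfolding Sset_def by blast+
  show "pword w" by (fact A(1))
  show B: "embeds_at u w (length w - length u)" using A(3) by blast
  show "\<And>j. embeds_at u w j \<Longrightarrow> j = length w - length u" using A(3) by blast
  from A(2) obtain j where "embeds_at u w j" unfolding embeds_def by blast
  then show "length u \<le> length w" unfolding embeds_at_def by simp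
qed

lemma Sset_I:
  assumes "pword w" "embeds_at u w (length w - length u)"
    "\<And>j. embeds_at u w j \<Longrightarrow> j = length w - length u"
  shows "w \<in> Sset u"
  using assms unfolding Sset_def embeds_def by blast

lemma pword_nth: "pword w \<longleftrightarrow> (\<forall>k<length w. 0 < w!k)"
  by (auto simp: pword_def in_set_conv_nth)

lemma raise_S:
  assumes idf: "inc_dec_fact u" and iu: "i < length u" and w: "w \<in> Sset u"
  shows "raise u i w \<in> Sset u"
proof -
  let ?n = "length u" let ?m = "length w" let ?r = "raise u i w"
  note S = Sset_D[OF w]
  have ge: "w!k \<le> ?r!k" if "k < ?m" for k using that by (simp add: nth_raise)
  show ?thesis
  proof (rule Sset_I)
    show "pword ?r" using S(1) ge unfolding pword_nth
      by (metis length_raise order_less_le_trans)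
    show "embeds_at u ?r (length ?r - ?n)"
      using S(2) ge unfolding embeds_at_def by (auto intro: order_trans)
    fix j assume ej: "embeds_at u ?r j"
    have "embeds_at u w j"
      unfolding embeds_at_def
    proof (intro conjI allI impI)
      show "j + ?n \<le> ?m" using ej by (simp add: embeds_at_def)
      fix k assume k: "k < ?n"
      let ?p = "j + k"
      have p: "?p < ?m" using ej k by (simp add: embeds_at_def)
      have ur: "u!k \<le> ?r!?p" using ej k by (simp add: embeds_at_def)
      show "u!k \<le> w!?p"
      proof (cases "?m - i \<le> ?p \<and> delta u i (?p - (?m - i)) > 0")
        case False
        then have "?r!?p = w!?p" using p by (auto simp: nth_raise)
        then show ?thesis using ur by simp
      next
        case True
        define jj where "jj = ?p - (?m - i)"
        have jj: "jj < i" "?p = ?m - i + jj" using True p S(3) iu by (auto simp: jj_def)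
        have lt: "u!(?n - i + jj) < u!jj" using True by (simp add: jj_def delta_def split: if_splits)
        have fin: "u!(?n - i + jj) \<le> w!?p"
        proof -
          have all: "\<forall>k<?n. u!k \<le> w!(?m - ?n + k)" using S(2) unfolding embeds_at_def by blast
          have lt2: "?n - i + jj < ?n" using jj iu by simp
          from all lt2 have "u!(?n - i + jj) \<le> w!(?m - ?n + (?n - i + jj))" by blast
          moreover have "?m - ?n + (?n - i + jj) = ?p" using jj iu S(3) by simp
          ultimately show ?thesis by simp
        qed
        have "j + ?n \<le> ?m" using ej by (simp add: embeds_at_def)
        then have "j \<le> ?m - ?n" by simp
        then have "?n - i + jj \<le> k" using jj iu S(3) by simp
        then have "u!k \<le> u!(?n - i + jj)"
          using no_valley[OF idf _ _ k lt] jj iu by simp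
        then show ?thesis using fin by simp
      qed
    qed
    then show "j = length ?r - ?n" using S(4) by simp
  qed
qed

definition Tset :: "nat list \<Rightarrow> nat \<Rightarrow> nat list set" where
  "Tset u i = {w \<in> Sset u. \<forall>jj<i. u!jj \<le> w!(length w - i + jj)}"

lemma S_tail:
  assumes w: "w \<in> Sset u" and iu: "i < length u" and jj: "jj < i"
  shows "u!(length u - i + jj) \<le> w!(length w - i + jj)"
proof -
  note S = Sset_D[OF w]
  have all: "\<forall>k<length u. u!k \<le> w!(length w - length u + k)" using S(2) unfolding embeds_at_def by blast
  have lt2: "length u - i + jj < length u" using jj iu by simp
  from all lt2 have "u!(length u - i + jj) \<le> w!(length w - length u + (length u - i + jj))" by blast
  moreover have "length w - length u + (length u - i + jj) = length w - i + jj" using S(3) iu jj by simp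
  ultimately show ?thesis by simp
qed

lemma raise_T:
  assumes idf: "inc_dec_fact u" and iu: "i < length u" and w: "w \<in> Sset u"
  shows "raise u i w \<in> Tset u i"
  unfolding Tset_def
proof (intro CollectI conjI allI impI)
  show "raise u i w \<in> Sset u" by (rule raise_S[OF idf iu w])
  fix jj assume jj: "jj < i"
  note S = Sset_D[OF w]
  have p: "length w - i + jj < length w" using S(3) iu jj by simp
  have "raise u i w ! (length w - i + jj) = w!(length w - i + jj) + delta u i jj"
    using p by (simp add: nth_raise)
  moreover have "u!(length u - i + jj) \<le> w!(length w - i + jj)" by (rule S_tail[OF w iu jj])
  ultimately show "u!jj \<le> raise u i w ! (length (raise u i w) - i + jj)"
    by (auto simp: delta_def) arith
qed

lemma T_low:
  assumes w: "w \<in> Tset u i" and iu: "i < length u" and jj: "jj < i"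
  shows "u!(length u - i + jj) \<le> w!(length w - i + jj) - delta u i jj"
    "delta u i jj \<le> w!(length w - i + jj)"
proof -
  have wS: "w \<in> Sset u" and t: "u!jj \<le> w!(length w - i + jj)" using w jj by (auto simp: Tset_def)
  have f: "u!(length u - i + jj) \<le> w!(length w - i + jj)" by (rule S_tail[OF wS iu jj])
  show "u!(length u - i + jj) \<le> w!(length w - i + jj) - delta u i jj"
    using t f by (auto simp: delta_def)
  show "delta u i jj \<le> w!(length w - i + jj)" using t by (auto simp: delta_def)
qed

lemma lower_le: "k < length w \<Longrightarrow> lower u i w ! k \<le> w ! k"
  by (simp add: nth_lower)

lemma lower_S:
  assumes pu: "pword u" and iu: "i < length u" and w: "w \<in> Tset u i"
  shows "lower u i w \<in> Sset u"
proof -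
  let ?n = "length u" let ?m = "length w" let ?l = "lower u i w"
  have wS: "w \<in> Sset u" using w by (simp add: Tset_def)
  note S = Sset_D[OF wS]
  have tailv: "u!(?n - i + (k - (?m - i))) \<le> ?l ! k" if "?m - i \<le> k" "k < ?m" for k
  proof -
    have jj: "k - (?m - i) < i" using that by simp
    have e: "?m - i + (k - (?m - i)) = k" using that by simp
    show ?thesis using T_low(1)[OF w iu jj] that e by (simp add: nth_lower)
  qed
  show ?thesis
  proof (rule Sset_I)
    show "pword ?l" unfolding pword_nth
    proof (intro allI impI)
      fix k assume k: "k < length ?l"
      show "0 < ?l ! k"
      proof (cases "?m - i \<le> k")
        case True
        have "?n - i + (k - (?m - i)) < ?n" using True k iu by simp
        then have "0 < u!(?n - i + (k - (?m - i)))" using pu by (simp add: pword_nth)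
        then show ?thesis using tailv[OF True] k by simp
      next
        case False then show ?thesis using k S(1) by (simp add: nth_lower pword_nth)
      qed
    qed
    show "embeds_at u ?l (length ?l - ?n)"
      unfolding embeds_at_def
    proof (intro conjI allI impI)
      show "length ?l - ?n + ?n \<le> length ?l" using S(3) by simp
      fix k assume k: "k < ?n"
      show "u!k \<le> ?l ! (length ?l - ?n + k)"
      proof (cases "?m - i \<le> ?m - ?n + k")
        case True
        have e: "?n - i + (?m - ?n + k - (?m - i)) = k" using True k iu S(3) by simp
        have i2: "?m - ?n + k < ?m" using k S(3) by simp
        have h: "u!(?n - i + (?m - ?n + k - (?m - i))) \<le> ?l ! (?m - ?n + k)" by (rule tailv[OF True i2])
        then show ?thesis unfolding e length_lower .
      next
        case False
        have "u!k \<le> w!(?m - ?n + k)" using S(2) k unfolding embeds_at_def by blast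
        then show ?thesis using False k S(3) by (simp add: nth_lower)
      qed
    qed
    fix j assume ej: "embeds_at u ?l j"
    have "embeds_at u w j" using ej unfolding embeds_at_def
      by (auto intro: order_trans[OF _ lower_le])
    then show "j = length ?l - ?n" using S(4) by simp
  qed
qed

lemma lower_raise: "lower u i (raise u i w) = w"
  by (rule nth_equalityI) (auto simp: nth_lower nth_raise)

lemma raise_lower:
  assumes iu: "i < length u" and w: "w \<in> Tset u i"
  shows "raise u i (lower u i w) = w"
proof (rule nth_equalityI)
  show "length (raise u i (lower u i w)) = length w" by simp
  fix k assume k: "k < length (raise u i (lower u i w))"
  show "raise u i (lower u i w) ! k = w ! k"
  proof (cases "length w - i \<le> k")
    case True
    have jj: "k - (length w - i) < i" using True k by simp
    have e: "length w - i + (k - (length w - i)) = k" using True by simp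
    show ?thesis using T_low(2)[OF w iu jj] True k e by (simp add: nth_lower nth_raise)
  next
    case False then show ?thesis using k by (simp add: nth_lower nth_raise)
  qed
qed

lemma sum_raise:
  assumes "i \<le> length w"
  shows "sum_list (raise u i w) = sum_list w + d_i u i"
proof -
  let ?m = "length w"
  have "sum_list (raise u i w) = (\<Sum>k<?m. raise u i w ! k)" by (simp add: sum_list_sum_nth atLeast0LessThan)
  also have "\<dots> = (\<Sum>k<?m. w!k + (if ?m - i \<le> k then delta u i (k - (?m - i)) else 0))"
    by (rule sum.cong) (auto simp: nth_raise)
  also have "\<dots> = (\<Sum>k<?m. w!k) + (\<Sum>k<?m. (if ?m - i \<le> k then delta u i (k - (?m - i)) else 0))"
    by (rule sum.distrib)
  also have "(\<Sum>k<?m. (if ?m - i \<le> k then delta u i (k - (?m - i)) else 0)) =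
      (\<Sum>k\<in>{k\<in>{..<?m}. ?m - i \<le> k}. delta u i (k - (?m - i)))"
    by (rule sum.inter_filter[symmetric]) simp
  also have "{k\<in>{..<?m}. ?m - i \<le> k} = {0 + (?m - i)..<i + (?m - i)}" using assms by auto
  also have "(\<Sum>k\<in>{0 + (?m - i)..<i + (?m - i)}. delta u i (k - (?m - i))) = (\<Sum>jj\<in>{0..<i}. delta u i jj)"
    by (subst sum.shift_bounds_nat_ivl) simp
  also have "\<dots> = d_i u i" by (simp add: d_i_def delta_def atLeast0LessThan)
  finally show ?thesis by (simp add: sum_list_sum_nth atLeast0LessThan)
qed

lemma GF_T:
  assumes idf: "inc_dec_fact u" and pu: "pword u" and iu: "i < length u"
  shows "GF (Tset u i) = GF (Sset u) * xvar ^ d_i u i"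
proof (rule GF_shift)
  show "bij_betw (raise u i) (Sset u) (Tset u i)"
  proof (rule bij_betw_byWitness[where f' = "lower u i"])
    show "\<forall>a\<in>Sset u. lower u i (raise u i a) = a" by (simp add: lower_raise)
    show "\<forall>a'\<in>Tset u i. raise u i (lower u i a') = a'" using raise_lower[OF iu] by blast
    show "raise u i ` Sset u \<subseteq> Tset u i" using raise_T[OF idf iu] by blast
    show "lower u i ` Tset u i \<subseteq> Sset u" using lower_S[OF pu iu] by blast
  qed
  fix w assume w: "w \<in> Sset u"
  show "length (raise u i w) = length w" by simp
  have "i \<le> length w" using Sset_D(3)[OF w] iu by simp
  then show "sum_list (raise u i w) = sum_list w + d_i u i" by (rule sum_raise)
qed



definition Ak :: "nat list \<Rightarrow> nat \<Rightarrow> nat \<Rightarrow> nat list set" where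
  "Ak u i k = {w' @ v | w' v. w' \<in> Tset u i \<and> length v = k \<and> (\<forall>l<k. u!(i+l) \<le> v!l)}"

lemma Ak_0: "Ak u i 0 = Tset u i"
  by (auto simp: Ak_def)

lemma Ak_Suc: "Ak u i (Suc k) = {w @ [a] | w a. w \<in> Ak u i k \<and> u!(i+k) \<le> a}"
proof
  show "Ak u i (Suc k) \<subseteq> {w @ [a] | w a. w \<in> Ak u i k \<and> u!(i+k) \<le> a}"
  proof
    fix x assume "x \<in> Ak u i (Suc k)"
    then obtain w' v where x: "x = w' @ v" "w' \<in> Tset u i" "length v = Suc k" "\<forall>l<Suc k. u!(i+l) \<le> v!l"
      unfolding Ak_def by blast
    have ne: "v \<noteq> []" using x(3) by auto
    have v: "v = butlast v @ [last v]" using ne by simp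
    have "\<forall>l<k. u!(i+l) \<le> butlast v ! l" using x(3,4) by (auto simp: nth_butlast)
    moreover have "length (butlast v) = k" using x(3) by simp
    ultimately have "w' @ butlast v \<in> Ak u i k"
      unfolding Ak_def using x(2) by blast
    moreover have "u!(i+k) \<le> last v" using x(3,4) ne by (simp add: last_conv_nth)
    moreover have "x = (w' @ butlast v) @ [last v]"
    proof -
      have "x = w' @ (butlast v @ [last v])" using x(1) v by simp
      then show ?thesis by simp
    qed
    ultimately show "x \<in> {w @ [a] | w a. w \<in> Ak u i k \<and> u!(i+k) \<le> a}" by blast
  qed
  show "{w @ [a] | w a. w \<in> Ak u i k \<and> u!(i+k) \<le> a} \<subseteq> Ak u i (Suc k)"
  proof
    fix x assume "x \<in> {w @ [a] | w a. w \<in> Ak u i k \<and> u!(i+k) \<le> a}"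
    then obtain w a where xw: "x = w @ [a]" "w \<in> Ak u i k" "u!(i+k) \<le> a" by blast
    from xw(2) obtain w' v where x: "w = w' @ v" "w' \<in> Tset u i" "length v = k" "\<forall>l<k. u!(i+l) \<le> v!l"
      unfolding Ak_def by blast
    have c: "\<forall>l<Suc k. u!(i+l) \<le> (v @ [a])!l"
      using x(3,4) xw(3) by (auto simp: nth_append less_Suc_eq)
    have l: "length (v @ [a]) = Suc k" using x(3) by simp
    have e: "x = w' @ (v @ [a])" using xw(1) x(1) by simp
    show "x \<in> Ak u i (Suc k)" unfolding Ak_def using e x(2) l c by blast
  qed
qed

lemma pow_regroup:
  fixes a b c g :: "'a::comm_semiring_1"
  shows "g * (a ^ k * b ^ s * c ^ k) * (a * b ^ t * c) = g * (a ^ Suc k * b ^ (s + t) * c ^ Suc k)"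
  by (simp add: power_add mult_ac)

lemma GF_Ak: "GF (Ak u i k) = GF (Tset u i) * (tvar ^ k * xvar ^ (\<Sum>l<k. u!(i+l)) * inverse (1 - xvar) ^ k)"
proof (induction k)
  case 0 then show ?case by (simp add: Ak_0)
next
  case (Suc k)
  have "GF (Ak u i (Suc k)) = GF (Ak u i k) * (tvar * xvar ^ u!(i+k) * inverse (1 - xvar))"
    unfolding Ak_Suc by (rule GF_append)
  also have "\<dots> = GF (Tset u i) * (tvar ^ Suc k * xvar ^ ((\<Sum>l<k. u!(i+l)) + u!(i+k)) * inverse (1 - xvar) ^ Suc k)"
    unfolding Suc.IH by (rule pow_regroup)
  finally show ?case by (simp only: sum.lessThan_Suc)
qed

lemma Siset_eq:
  assumes pu: "pword u" and iu: "i < length u"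
  shows "Siset u i = Ak u i (length u - i)"
proof
  let ?n = "length u"
  show "Siset u i \<subseteq> Ak u i (?n - i)"
  proof
    fix w assume "w \<in> Siset u i"
    then have pw: "pword w" and len: "2 * ?n \<le> length w + i"
      and e1: "embeds_at u w (length w - ?n)" and e2: "embeds_at u w (length w + i - 2 * ?n)"
      and e3: "\<And>j. j < length w + i - 2 * ?n \<Longrightarrow> \<not> embeds_at u w j"
      unfolding Siset_def by blast+
    let ?m = "length w"
    define q where "q = ?m + i - ?n"
    define p where "p = ?m + i - 2 * ?n"
    have qm: "q \<le> ?m" "p + ?n = q" "q - ?n = p" "?m - ?n + i = q" using len iu by (auto simp: q_def p_def)
    have all1: "\<forall>k<?n. u!k \<le> w!(?m - ?n + k)" using e1 unfolding embeds_at_def by blast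
    have all2: "\<forall>k<?n. u!k \<le> w!(p + k)" using e2 unfolding embeds_at_def p_def by blast
    let ?w' = "take q w" let ?v = "drop q w"
    have lw': "length ?w' = q" using qm by simp
    have "?w' \<in> Sset u"
    proof (rule Sset_I)
      show "pword ?w'" using pw unfolding pword_def by (meson in_set_takeD)
      show "embeds_at u ?w' (length ?w' - ?n)"
        unfolding embeds_at_def lw' using all2 qm by auto
      fix j assume ej: "embeds_at u ?w' j"
      then have jq: "j + ?n \<le> q" by (simp add: embeds_at_def lw')
      have "embeds_at u w j" using ej qm unfolding embeds_at_def by auto
      then have "\<not> j < p" using e3 p_def by blast
      then show "j = length ?w' - ?n" using jq qm lw' by simp
    qed
    moreover have "\<forall>jj<i. u!jj \<le> ?w'!(length ?w' - i + jj)"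
    proof (intro allI impI)
      fix jj assume jj: "jj < i"
      have "u!jj \<le> w!(?m - ?n + jj)" using all1 jj iu by simp
      moreover have "length ?w' - i + jj = ?m - ?n + jj" using lw' qm by simp
      moreover have "?m - ?n + jj < q" using jj qm by simp
      ultimately show "u!jj \<le> ?w'!(length ?w' - i + jj)" by simp
    qed
    ultimately have wT: "?w' \<in> Tset u i" by (simp add: Tset_def)
    have lv: "length ?v = ?n - i" using qm q_def by simp
    have vc: "\<forall>l<?n - i. u!(i+l) \<le> ?v!l"
    proof (intro allI impI)
      fix l assume l: "l < ?n - i"
      have "u!(i+l) \<le> w!(?m - ?n + (i + l))" using all1 l by simp
      moreover have "?m - ?n + (i + l) = q + l" using qm by simp
      ultimately show "u!(i+l) \<le> ?v!l" using qm by simp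
    qed
    have "w = ?w' @ ?v" by simp
    then show "w \<in> Ak u i (?n - i)" unfolding Ak_def using wT lv vc by blast
  qed
  show "Ak u i (?n - i) \<subseteq> Siset u i"
  proof
    fix x assume "x \<in> Ak u i (?n - i)"
    then obtain w' v where x: "x = w' @ v" and wT: "w' \<in> Tset u i" and lv: "length v = ?n - i"
      and vc: "\<forall>l<?n - i. u!(i+l) \<le> v!l" unfolding Ak_def by blast
    have wS: "w' \<in> Sset u" using wT by (simp add: Tset_def)
    have tl: "\<forall>jj<i. u!jj \<le> w'!(length w' - i + jj)" using wT by (simp add: Tset_def)
    note S = Sset_D[OF wS]
    let ?L = "length w'"
    have lx: "length x = ?L + (?n - i)" using x lv by simp
    have a1: "length x - ?n = ?L - i" "length x + i - 2 * ?n = ?L - ?n" using lx iu S(3) by auto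
    have pwx: "pword x" unfolding pword_nth
    proof (intro allI impI)
      fix k assume k: "k < length x"
      show "0 < x!k"
      proof (cases "k < ?L")
        case True then show ?thesis using S(1) x by (simp add: nth_append pword_nth)
      next
        case False
        have l: "k - ?L < ?n - i" using k False lx by simp
        then have "u!(i + (k - ?L)) \<le> v!(k - ?L)" using vc by blast
        moreover have "0 < u!(i + (k - ?L))" using pu l by (simp add: pword_nth)
        ultimately show ?thesis using x False by (simp add: nth_append)
      qed
    qed
    have emb1: "embeds_at u x (length x - ?n)"
      unfolding embeds_at_def a1
    proof (intro conjI allI impI)
      show "?L - i + ?n \<le> length x" using lx iu S(3) by simp
      fix k assume k: "k < ?n"
      show "u!k \<le> x!(?L - i + k)"
      proof (cases "k < i")
        case True
        have "?L - i + k < ?L" using True iu S(3) by simp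
        then show ?thesis using tl True x by (simp add: nth_append)
      next
        case False
        have e: "?L - i + k - ?L = k - i" using False iu S(3) by simp
        have l: "k - i < ?n - i" using k False by simp
        have "u!(i + (k - i)) \<le> v!(k - i)" using vc l by blast
        then have uk: "u!k \<le> v!(k - i)" using False by simp
        have nl: "\<not> (?L - i + k < ?L)" using False iu S(3) by simp
        have "x!(?L - i + k) = v!(?L - i + k - ?L)" unfolding x nth_append by (simp only: nl if_False)
        then show ?thesis unfolding e using uk by simp
      qed
    qed
    have emb2: "embeds_at u x (length x + i - 2 * ?n)"
      unfolding embeds_at_def a1
    proof (intro conjI allI impI)
      show "?L - ?n + ?n \<le> length x" using lx S(3) by simp
      fix k assume k: "k < ?n"
      have "u!k \<le> w'!(?L - ?n + k)" using S(2) k unfolding embeds_at_def by blast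
      moreover have "?L - ?n + k < ?L" using k S(3) by simp
      ultimately show "u!k \<le> x!(?L - ?n + k)" using x by (simp add: nth_append)
    qed
    have emb3: "\<forall>j < length x + i - 2 * ?n. \<not> embeds_at u x j"
    proof (intro allI impI notI)
      fix j assume j: "j < length x + i - 2 * ?n" and ej: "embeds_at u x j"
      have jl: "j < ?L - ?n" using j a1 by simp
      have "embeds_at u w' j" unfolding embeds_at_def
      proof (intro conjI allI impI)
        show "j + ?n \<le> ?L" using jl by simp
        fix k assume k: "k < ?n"
        have "u!k \<le> x!(j + k)" using ej k unfolding embeds_at_def by blast
        moreover have "j + k < ?L" using jl k by simp
        ultimately show "u!k \<le> w'!(j + k)" using x by (simp add: nth_append)
      qed
      then have "j = ?L - ?n" by (rule S(4))
      then show False using jl by simp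
    qed
    have "2 * ?n \<le> length x + i" using lx iu S(3) by simp
    then show "x \<in> Siset u i" unfolding Siset_def using pwx emb1 emb2 emb3 by blast
  qed
qed



lemma pow_regroup2:
  fixes a b c g :: "'a::comm_semiring_1"
  shows "g * b ^ d * (a ^ r * b ^ s * c ^ r) = g * a ^ r * b ^ (d + s) * c ^ r"
  by (simp add: power_add mult_ac)

theorem lemma2:
  fixes u :: "nat list" and i :: nat
  assumes "pword u" and "inc_dec_fact u" and "1 \<le> i" and "i < length u"
  shows "GF (Siset u i) =
    GF (Sset u) * tvar ^ (length u - i) * xvar ^ (d_i u i + sum_list (drop i u))
      * (inverse (1 - xvar)) ^ (length u - i)"
proof -
  have s: "sum_list (drop i u) = (\<Sum>l<length u - i. u!(i+l))"
    by (simp add: sum_list_sum_nth atLeast0LessThan)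
  have "GF (Siset u i) = GF (Tset u i) * (tvar ^ (length u - i) * xvar ^ (\<Sum>l<length u - i. u!(i+l))
      * inverse (1 - xvar) ^ (length u - i))"
    unfolding Siset_eq[OF assms(1,4)] by (rule GF_Ak)
  also have "GF (Tset u i) = GF (Sset u) * xvar ^ d_i u i" by (rule GF_T[OF assms(2,1,4)])
  finally show ?thesis unfolding s by (simp only: pow_regroup2)
qed

end
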